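(* Let $R$ be a root system in $\mathbb{R}^N$ and let $R'=\{\alpha_1,\dots,\alpha_n\}$ be a positive orthogonal subsystem of $R$. For $i=1,\dots,n$ let $\tau_{\alpha_i}(x)=x-\frac{\langle x,\alpha_i\rangle}{|\alpha_i|^2}\alpha_i$ and define the operator $\rho_i$ on the space $\Pi^N$ of polynomial functions on $\mathbb{R}^N$ by $$(\rho_i f)(x)=\frac{f(x)-f(\tau_{\alpha_i}x)}{\langle x,\alpha_i\rangle}.$$ Then: (i) for all $i,j=1,\dots,n$, $[\rho_i,\rho_j]=\rho_i\rho_j-\rho_j\rho_i=0$; (ii) if $\alpha\in\mathbb{R}^N$ is orthogonal to $\alpha_i$, then $[\partial_\alpha,\rho_i]=0$, where $\partial_\alpha$ denotes the directional derivative in direction $\alpha$.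
   Context: $\langle\cdot,\cdot\rangle$ is the Euclidean inner product on $\mathbb{R}^N$ and $|x|=\sqrt{\langle x,x\rangle}$. A root system is a finite set $R\subset\mathbb{R}^N\setminus\{0\}$ with $s_\alpha(R)=R$ and $R\cap\mathbb{R}\alpha=\{\pm\alpha\}$ for all $\alpha\in R$, where $s_\alpha(x)=x-2\frac{\langle x,\alpha\rangle}{|\alpha|^2}\alpha$. A subsystem $R''$ of $R$ is a subset such that $\alpha\in R''\Rightarrow-\alpha\in R''$, and $\alpha,\beta\in R''$, $\alpha+\beta\in R\Rightarrow\alpha+\beta\in R''$; it is an orthogonal subsystem if its roots are pairwise orthogonal (apart from $\pm$ pairs). A positive orthogonal subsystem $R'$ is a subset of an orthogonal subsystem $R''$ with $R''=R'\cup(-R')$, $R'\cap(-R')=\emptyset$; so the elements of $R'$ are pairwise orthogonal. Each $\rho_i$ maps polynomials to polynomials. *)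

theory Defs
  imports "HOL-Analysis.Analysis"
begin

definition refl_root :: "real^'n \<Rightarrow> real^'n \<Rightarrow> real^'n" where
  "refl_root a x = x - (2 * inner x a / (norm a)^2) *\<^sub>R a"

definition root_system :: "(real^'n) set \<Rightarrow> bool" where
  "root_system R \<longleftrightarrow> finite R \<and> 0 \<notin> R \<and>
     (\<forall>a\<in>R. refl_root a ` R = R) \<and>
     (\<forall>a\<in>R. R \<inter> {c *\<^sub>R a | c. True} = {a, -a})"

definition subsystem :: "(real^'n) set \<Rightarrow> (real^'n) set \<Rightarrow> bool" where
  "subsystem R S \<longleftrightarrow> S \<subseteq> R \<and> (\<forall>a\<in>S. -a \<in> S) \<and>
     (\<forall>a\<in>S. \<forall>b\<in>S. a + b \<in> R \<longrightarrow> a + b \<in> S)"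

definition orthogonal_subsystem :: "(real^'n) set \<Rightarrow> (real^'n) set \<Rightarrow> bool" where
  "orthogonal_subsystem R S \<longleftrightarrow> subsystem R S \<and>
     (\<forall>a\<in>S. \<forall>b\<in>S. b \<noteq> a \<and> b \<noteq> -a \<longrightarrow> inner a b = 0)"

definition positive_orthogonal_subsystem :: "(real^'n) set \<Rightarrow> (real^'n) set \<Rightarrow> bool" where
  "positive_orthogonal_subsystem R P \<longleftrightarrow>
     (\<exists>S. orthogonal_subsystem R S \<and> S = P \<union> uminus ` P \<and> P \<inter> uminus ` P = {})"

inductive polyfun :: "(real^'n \<Rightarrow> real) \<Rightarrow> bool" where
  const: "polyfun (\<lambda>x. c)"
| coord: "polyfun (\<lambda>x. x $ k)"
| add: "polyfun f \<Longrightarrow> polyfun g \<Longrightarrow> polyfun (\<lambda>x. f x + g x)"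
| mult: "polyfun f \<Longrightarrow> polyfun g \<Longrightarrow> polyfun (\<lambda>x. f x * g x)"

definition tau :: "real^'n \<Rightarrow> real^'n \<Rightarrow> real^'n" where
  "tau a x = x - (inner x a / (norm a)^2) *\<^sub>R a"

definition rho :: "real^'n \<Rightarrow> (real^'n \<Rightarrow> real) \<Rightarrow> (real^'n \<Rightarrow> real)" where
  "rho a f = (THE g. polyfun g \<and>
      (\<forall>x. inner x a \<noteq> 0 \<longrightarrow> g x = (f x - f (tau a x)) / inner x a))"

definition dir_deriv :: "real^'n \<Rightarrow> (real^'n \<Rightarrow> real) \<Rightarrow> (real^'n \<Rightarrow> real)" where
  "dir_deriv v f = (\<lambda>x. frechet_derivative f (at x) v)"

end

theory Submission
  imports Defs
begin

lemma polyfun_minus: "polyfun f \<Longrightarrow> polyfun g \<Longrightarrow> polyfun (\<lambda>x. f x - g x)"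
proof -
  assume f: "polyfun f" and g: "polyfun g"
  have "polyfun (\<lambda>x. f x + (\<lambda>x. -1) x * g x)"
    by (rule polyfun.add[OF f polyfun.mult[OF polyfun.const g]])
  then show ?thesis by simp
qed

lemma polyfun_sum: "finite S \<Longrightarrow> (\<forall>i\<in>S. polyfun (f i)) \<Longrightarrow> polyfun (\<lambda>x. \<Sum>i\<in>S. f i x)"
proof (induction S rule: finite_induct)
  case empty
  then show ?case using polyfun.const[of 0] by simp
next
  case (insert a S)
  then show ?case using polyfun.add[of "f a" "\<lambda>x. \<Sum>i\<in>S. f i x"] by simp
qed

lemma polyfun_inner: "polyfun (\<lambda>x::real^'n. inner x a)"
proof -
  have "polyfun (\<lambda>x::real^'n. \<Sum>i\<in>UNIV. x $ i * a $ i)"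
    by (rule polyfun_sum) (auto intro: polyfun.mult polyfun.coord polyfun.const)
  then show ?thesis by (simp add: inner_vec_def)
qed

lemma polyfun_comp: "polyfun f \<Longrightarrow> (\<forall>k. polyfun (\<lambda>x. L x $ k)) \<Longrightarrow> polyfun (\<lambda>x. f (L x))"
proof (induction f rule: polyfun.induct)
  case (const c)
  show ?case by (simp add: polyfun.const)
next
  case (coord k)
  then show ?case by blast
next
  case (add f g)
  then show ?case by (auto intro: polyfun.add)
next
  case (mult f g)
  then show ?case by (auto intro: polyfun.mult)
qed

lemma polyfun_tau: "polyfun f \<Longrightarrow> polyfun (\<lambda>x. f (tau a x))"
proof (rule polyfun_comp)
  show "\<forall>k. polyfun (\<lambda>x. tau a x $ k)"
  proof
    fix k
    have "polyfun (\<lambda>x. x $ k - inner x a * (\<lambda>x. a $ k / (norm a)^2) x)"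
      by (intro polyfun_minus polyfun.mult polyfun_inner polyfun.coord polyfun.const)
    then show "polyfun (\<lambda>x. tau a x $ k)" by (simp add: tau_def)
  qed
qed

lemma polyfun_cont: "polyfun f \<Longrightarrow> isCont f x"
  by (induction f rule: polyfun.induct) (auto intro!: continuous_intros)

lemma dense_eq:
  fixes g h :: "real^'n \<Rightarrow> real"
  assumes cg: "\<And>x. isCont g x" and ch: "\<And>x. isCont h x"
    and da: "inner d a \<noteq> 0" and db: "inner d b \<noteq> 0"
    and eq: "\<And>x. inner x a \<noteq> 0 \<Longrightarrow> inner x b \<noteq> 0 \<Longrightarrow> g x = h x"
  shows "g = h"
proof
  fix x
  let ?y = "\<lambda>t::real. x + t *\<^sub>R d"
  have ly: "(?y \<longlongrightarrow> x) (at 0)"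
    by (auto intro!: tendsto_eq_intros)
  have 1: "((\<lambda>t. g (?y t)) \<longlongrightarrow> g x) (at 0)"
    using isCont_tendsto_compose[OF cg ly] .
  have 2: "((\<lambda>t. h (?y t)) \<longlongrightarrow> h x) (at 0)"
    using isCont_tendsto_compose[OF ch ly] .
  have ea: "eventually (\<lambda>t. t \<noteq> - inner x a / inner d a) (at (0::real))"
    by (rule eventually_neq_at_within)
  have eb: "eventually (\<lambda>t. t \<noteq> - inner x b / inner d b) (at (0::real))"
    by (rule eventually_neq_at_within)
  have "eventually (\<lambda>t. g (?y t) = h (?y t)) (at 0)"
    using eventually_conj[OF ea eb]
  proof (rule eventually_mono)
    fix t assume t: "t \<noteq> - inner x a / inner d a \<and> t \<noteq> - inner x b / inner d b"
    have "inner (?y t) a \<noteq> 0"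
      using t da by (auto simp: inner_add_left field_simps)
    moreover have "inner (?y t) b \<noteq> 0"
      using t db by (auto simp: inner_add_left field_simps)
    ultimately show "g (?y t) = h (?y t)" by (rule eq)
  qed
  then have "((\<lambda>t. h (?y t)) \<longlongrightarrow> g x) (at 0)"
    using 1 by (rule Lim_transform_eventually[rotated])
  then show "g x = h x" using 2 tendsto_unique[OF trivial_limit_at] by blast
qed

lemma rho_exists:
  fixes a :: "real^'n"
  assumes a: "a \<noteq> 0"
  shows "polyfun f \<Longrightarrow> \<exists>g. polyfun g \<and> (\<forall>x. inner x a \<noteq> 0 \<longrightarrow> g x = (f x - f (tau a x)) / inner x a)"
proof (induction f rule: polyfun.induct)
  case (const c)
  show ?case by (rule exI[of _ "\<lambda>x. 0"]) (simp add: polyfun.const)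
next
  case (coord k)
  have na: "(norm a)^2 \<noteq> 0" using a by simp
  show ?case
  proof (rule exI[of _ "\<lambda>x. a $ k / (norm a)^2"], intro conjI allI impI)
    show "polyfun (\<lambda>x. a $ k / (norm a)^2)" by (rule polyfun.const)
    fix x :: "real^'n" assume "inner x a \<noteq> 0"
    then show "a $ k / (norm a)^2 = (x $ k - tau a x $ k) / inner x a"
      using na by (simp add: tau_def field_simps)
  qed
next
  case (add f g)
  then obtain g1 g2 where g1: "polyfun g1" "\<forall>x. inner x a \<noteq> 0 \<longrightarrow> g1 x = (f x - f (tau a x)) / inner x a"
    and g2: "polyfun g2" "\<forall>x. inner x a \<noteq> 0 \<longrightarrow> g2 x = (g x - g (tau a x)) / inner x a" by blast
  show ?case
  proof (rule exI[of _ "\<lambda>x. g1 x + g2 x"], intro conjI allI impI)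
    show "polyfun (\<lambda>x. g1 x + g2 x)" using g1 g2 by (auto intro: polyfun.add)
    fix x :: "real^'n" assume "inner x a \<noteq> 0"
    then show "g1 x + g2 x = (f x + g x - (f (tau a x) + g (tau a x))) / inner x a"
      using g1 g2 by (simp add: field_simps)
  qed
next
  case (mult f g)
  then obtain g1 g2 where g1: "polyfun g1" "\<forall>x. inner x a \<noteq> 0 \<longrightarrow> g1 x = (f x - f (tau a x)) / inner x a"
    and g2: "polyfun g2" "\<forall>x. inner x a \<noteq> 0 \<longrightarrow> g2 x = (g x - g (tau a x)) / inner x a" by blast
  show ?case
  proof (rule exI[of _ "\<lambda>x. f x * g2 x + g (tau a x) * g1 x"], intro conjI allI impI)
    show "polyfun (\<lambda>x. f x * g2 x + g (tau a x) * g1 x)"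
      using g1 g2 mult polyfun_tau[of g a] by (auto intro: polyfun.add polyfun.mult)
    fix x :: "real^'n" assume xa: "inner x a \<noteq> 0"
    have e1: "g1 x = (f x - f (tau a x)) / inner x a" using g1 xa by blast
    have e2: "g2 x = (g x - g (tau a x)) / inner x a" using g2 xa by blast
    show "f x * g2 x + g (tau a x) * g1 x = (f x * g x - f (tau a x) * g (tau a x)) / inner x a"
      unfolding e1 e2 using xa by (simp add: field_simps algebra_simps)
  qed
qed

lemma rho_char:
  fixes a :: "real^'n"
  assumes a: "a \<noteq> 0" and f: "polyfun f"
  shows "polyfun (rho a f) \<and> (\<forall>x. inner x a \<noteq> 0 \<longrightarrow> rho a f x = (f x - f (tau a x)) / inner x a)"
proof -
  obtain g where g: "polyfun g" "\<forall>x. inner x a \<noteq> 0 \<longrightarrow> g x = (f x - f (tau a x)) / inner x a"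
    using rho_exists[OF a f] by blast
  have aa: "inner a a \<noteq> 0" using a by simp
  have "rho a f = g"
    unfolding rho_def
  proof (rule the_equality)
    show "polyfun g \<and> (\<forall>x. inner x a \<noteq> 0 \<longrightarrow> g x = (f x - f (tau a x)) / inner x a)" using g by blast
    fix h assume h: "polyfun h \<and> (\<forall>x. inner x a \<noteq> 0 \<longrightarrow> h x = (f x - f (tau a x)) / inner x a)"
    show "h = g"
      by (rule dense_eq[OF polyfun_cont polyfun_cont aa aa]) (use h g in auto)
  qed
  then show ?thesis using g by simp
qed

lemma polyfun_deriv:
  fixes v :: "real^'n"
  shows "polyfun f \<Longrightarrow> (\<forall>x. f differentiable (at x)) \<and> polyfun (\<lambda>x. frechet_derivative f (at x) v)"
proof (induction f rule: polyfun.induct)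
  case (const c)
  have "\<And>x. frechet_derivative (\<lambda>x::real^'n. c) (at x) = (\<lambda>h. 0)"
    by (rule frechet_derivative_at[symmetric]) (rule has_derivative_const)
  then show ?case by (simp add: polyfun.const)
next
  case (coord k)
  have d: "\<And>x. ((\<lambda>x::real^'n. x $ k) has_derivative (\<lambda>h. h $ k)) (at x)"
    by (rule bounded_linear_imp_has_derivative) (rule bounded_linear_vec_nth)
  then have "\<And>x. frechet_derivative (\<lambda>x::real^'n. x $ k) (at x) = (\<lambda>h. h $ k)"
    by (rule frechet_derivative_at[symmetric])
  then show ?case using d by (auto simp: polyfun.const differentiable_def)
next
  case (add f g)
  have "\<And>x. frechet_derivative (\<lambda>x. f x + g x) (at x) = (\<lambda>h. frechet_derivative f (at x) h + frechet_derivative g (at x) h)"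
    by (rule frechet_derivative_at[symmetric], rule has_derivative_add)
      (use add in \<open>auto simp: frechet_derivative_works[symmetric]\<close>)
  then show ?case using add by (auto intro: polyfun.add)
next
  case (mult f g)
  have "\<And>x. ((\<lambda>x. f x * g x) has_derivative (\<lambda>h. f x * frechet_derivative g (at x) h + frechet_derivative f (at x) h * g x)) (at x)"
    by (rule has_derivative_mult) (use mult in \<open>auto simp: frechet_derivative_works[symmetric]\<close>)
  then have "\<And>x. frechet_derivative (\<lambda>x. f x * g x) (at x) = (\<lambda>h. f x * frechet_derivative g (at x) h + frechet_derivative f (at x) h * g x)"
    by (rule frechet_derivative_at[symmetric])
  moreover have "\<And>x. (\<lambda>x. f x * g x) differentiable (at x)"
    using mult by (auto intro: differentiable_mult)
  ultimately show ?case using mult by (auto intro!: polyfun.add polyfun.mult)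
qed

lemma tau_inner: "inner a b = 0 \<Longrightarrow> inner (tau a x) b = inner x b"
  by (simp add: tau_def inner_diff_left)

lemma tau_comm:
  assumes "inner a b = 0"
  shows "tau a (tau b x) = tau b (tau a x)"
proof -
  have 1: "inner (tau b x) a = inner x a" using assms tau_inner[of b a x] by (simp add: inner_commute)
  have 2: "inner (tau a x) b = inner x b" using assms tau_inner[of a b x] by simp
  show ?thesis unfolding tau_def[of a "tau b x"] tau_def[of b "tau a x"] 1 2
    by (simp add: tau_def algebra_simps)
qed

lemma tau_line: "inner v a = 0 \<Longrightarrow> tau a (x + t *\<^sub>R v) = tau a x + t *\<^sub>R v"
  by (simp add: tau_def inner_add_left algebra_simps)

lemma rho_comm:
  fixes a b :: "real^'n"
  assumes a: "a \<noteq> 0" and b: "b \<noteq> 0" and ab: "inner a b = 0" and f: "polyfun f"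
  shows "rho a (rho b f) = rho b (rho a f)"
proof -
  note ra = rho_char[OF a f] and rb = rho_char[OF b f]
  note rab = rho_char[OF a conjunct1[OF rb]] and rba = rho_char[OF b conjunct1[OF ra]]
  have ba: "inner b a = 0" using ab by (simp add: inner_commute)
  have d1: "inner (a + b) a \<noteq> 0" using a ba by (simp add: inner_add_left)
  have d2: "inner (a + b) b \<noteq> 0" using b ab by (simp add: inner_add_left)
  show ?thesis
  proof (rule dense_eq[OF polyfun_cont polyfun_cont d1 d2])
    show "polyfun (rho a (rho b f))" using rab by blast
    show "polyfun (rho b (rho a f))" using rba by blast
    fix x assume xa: "inner x a \<noteq> 0" and xb: "inner x b \<noteq> 0"
    have i1: "inner (tau a x) b = inner x b" using tau_inner[OF ab] .
    have i2: "inner (tau b x) a = inner x a" using tau_inner[OF ba] .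
    have "rho a (rho b f) x = (rho b f x - rho b f (tau a x)) / inner x a" using rab xa by blast
    also have "\<dots> = ((f x - f (tau b x)) / inner x b - (f (tau a x) - f (tau b (tau a x))) / inner x b) / inner x a"
      using rb xb i1 by simp
    also have "\<dots> = (f x - f (tau b x) - f (tau a x) + f (tau a (tau b x))) / (inner x a * inner x b)"
      using xa xb tau_comm[OF ab, of x] by (simp add: field_simps)
    finally have L: "rho a (rho b f) x = (f x - f (tau b x) - f (tau a x) + f (tau a (tau b x))) / (inner x a * inner x b)" .
    have "rho b (rho a f) x = (rho a f x - rho a f (tau b x)) / inner x b" using rba xb by blast
    also have "\<dots> = ((f x - f (tau a x)) / inner x a - (f (tau b x) - f (tau a (tau b x))) / inner x a) / inner x b"
      using ra xa i2 by simp
    also have "\<dots> = (f x - f (tau b x) - f (tau a x) + f (tau a (tau b x))) / (inner x a * inner x b)"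
      using xa xb by (simp add: field_simps)
    finally show "rho a (rho b f) x = rho b (rho a f) x" using L by simp
  qed
qed

lemma deriv_line:
  fixes f :: "real^'n \<Rightarrow> real"
  assumes "f differentiable (at y)"
  shows "((\<lambda>t. f (y + t *\<^sub>R v)) has_real_derivative frechet_derivative f (at y) v) (at 0)"
proof -
  let ?F = "frechet_derivative f (at y)"
  have fd: "(f has_derivative ?F) (at (y + 0 *\<^sub>R v))"
    using assms by (simp add: frechet_derivative_works)
  have ld: "((\<lambda>t. y + t *\<^sub>R v) has_derivative (\<lambda>t. t *\<^sub>R v)) (at (0::real))"
    by (auto intro!: derivative_eq_intros)
  have "((\<lambda>t. f (y + t *\<^sub>R v)) has_derivative (\<lambda>t. ?F (t *\<^sub>R v))) (at 0)"
    using has_derivative_compose[OF ld fd] by (simp add: o_def)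
  moreover have "linear ?F" using fd has_derivative_linear by blast
  then have "(\<lambda>t. ?F (t *\<^sub>R v)) = (\<lambda>t. ?F v * t)"
    by (auto simp: linear_scale)
  ultimately show ?thesis by (simp add: has_field_derivative_def)
qed

lemma rho_deriv:
  fixes a v :: "real^'n"
  assumes a: "a \<noteq> 0" and va: "inner v a = 0" and f: "polyfun f"
  shows "dir_deriv v (rho a f) = rho a (dir_deriv v f)"
proof -
  note ra = rho_char[OF a f]
  have Df: "polyfun (dir_deriv v f)" "\<forall>x. f differentiable (at x)"
    using polyfun_deriv[OF f, of v] by (auto simp: dir_deriv_def)
  note rD = rho_char[OF a Df(1)]
  have Dr: "polyfun (dir_deriv v (rho a f))" "\<forall>x. rho a f differentiable (at x)"
    using polyfun_deriv[OF conjunct1[OF ra], of v] by (auto simp: dir_deriv_def)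
  have aa: "inner a a \<noteq> 0" using a by simp
  show ?thesis
  proof (rule dense_eq[OF polyfun_cont polyfun_cont aa aa])
    show "polyfun (dir_deriv v (rho a f))" using Dr by blast
    show "polyfun (rho a (dir_deriv v f))" using rD by blast
    fix x :: "real^'n" assume xa: "inner x a \<noteq> 0"
    have 1: "((\<lambda>t. rho a f (x + t *\<^sub>R v)) has_real_derivative dir_deriv v (rho a f) x) (at 0)"
      unfolding dir_deriv_def using deriv_line Dr(2) by blast
    have eq: "(\<lambda>t. rho a f (x + t *\<^sub>R v)) = (\<lambda>t. (f (x + t *\<^sub>R v) - f (tau a x + t *\<^sub>R v)) / inner x a)"
    proof
      fix t
      have "inner (x + t *\<^sub>R v) a = inner x a" using va by (simp add: inner_add_left)
      then show "rho a f (x + t *\<^sub>R v) = (f (x + t *\<^sub>R v) - f (tau a x + t *\<^sub>R v)) / inner x a"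
        using ra xa tau_line[OF va, of x t] by simp
    qed
    have d1: "((\<lambda>t. f (x + t *\<^sub>R v)) has_real_derivative dir_deriv v f x) (at 0)"
      unfolding dir_deriv_def using deriv_line Df(2) by blast
    have d2: "((\<lambda>t. f (tau a x + t *\<^sub>R v)) has_real_derivative dir_deriv v f (tau a x)) (at 0)"
      unfolding dir_deriv_def using deriv_line Df(2) by blast
    have 2: "((\<lambda>t. (f (x + t *\<^sub>R v) - f (tau a x + t *\<^sub>R v)) / inner x a) has_real_derivative
        (dir_deriv v f x - dir_deriv v f (tau a x)) / inner x a) (at 0)"
      by (intro DERIV_cdivide DERIV_diff d1 d2)
    have "dir_deriv v (rho a f) x = (dir_deriv v f x - dir_deriv v f (tau a x)) / inner x a"
      using DERIV_unique[OF 1[unfolded eq] 2] .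
    then show "dir_deriv v (rho a f) x = rho a (dir_deriv v f) x" using rD xa by simp
  qed
qed

theorem proposition3p1:
  fixes R P :: "(real^'n) set"
  assumes "root_system R"
    and "positive_orthogonal_subsystem R P"
  shows "(\<forall>ai\<in>P. \<forall>aj\<in>P. \<forall>f. polyfun f \<longrightarrow>
            rho ai (rho aj f) = rho aj (rho ai f))
       \<and> (\<forall>ai\<in>P. \<forall>v. inner v ai = 0 \<longrightarrow> (\<forall>f. polyfun f \<longrightarrow>
            dir_deriv v (rho ai f) = rho ai (dir_deriv v f)))"
proof -
  obtain S where S: "orthogonal_subsystem R S" "S = P \<union> uminus ` P" "P \<inter> uminus ` P = {}"
    using assms(2) unfolding positive_orthogonal_subsystem_def by blast
  have SR: "S \<subseteq> R" using S(1) unfolding orthogonal_subsystem_def subsystem_def by simp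
  have PR: "P \<subseteq> R" using SR S(2) by simp
  have z: "0 \<notin> R" using assms(1) unfolding root_system_def by simp
  have nz: "\<And>a. a \<in> P \<Longrightarrow> a \<noteq> 0" using PR z by auto
  have orth: "\<And>a b. a \<in> P \<Longrightarrow> b \<in> P \<Longrightarrow> a \<noteq> b \<Longrightarrow> inner a b = 0"
  proof -
    fix a b assume a: "a \<in> P" and b: "b \<in> P" and ab: "a \<noteq> b"
    have "b \<noteq> - a"
    proof
      assume "b = - a"
      then have "a = - b" by simp
      then have "a \<in> uminus ` P" using b by blast
      then show False using a S(3) by blast
    qed
    have o: "\<forall>a\<in>S. \<forall>b\<in>S. b \<noteq> a \<and> b \<noteq> -a \<longrightarrow> inner a b = 0"
      using S(1) unfolding orthogonal_subsystem_def by simp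
    have "a \<in> S" "b \<in> S" using S(2) a b by auto
    then show "inner a b = 0" using o ab \<open>b \<noteq> - a\<close> by auto
  qed
  show ?thesis
  proof (intro conjI ballI allI impI)
    fix ai aj f assume "ai \<in> P" "aj \<in> P" "polyfun (f :: real^'n \<Rightarrow> real)"
    then show "rho ai (rho aj f) = rho aj (rho ai f)"
    proof (cases "ai = aj")
      case False
      then show ?thesis using rho_comm[OF nz[OF \<open>ai \<in> P\<close>] nz[OF \<open>aj \<in> P\<close>] orth[OF \<open>ai \<in> P\<close> \<open>aj \<in> P\<close> False] \<open>polyfun f\<close>] by simp
    qed simp
  next
    fix ai v f assume "ai \<in> P" "inner v ai = 0" "polyfun (f :: real^'n \<Rightarrow> real)"
    then show "dir_deriv v (rho ai f) = rho ai (dir_deriv v f)"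
      using rho_deriv[OF nz[OF \<open>ai \<in> P\<close>] \<open>inner v ai = 0\<close> \<open>polyfun f\<close>] by simp
  qed
qed

end
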